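(* Fix integers $k\ge 1$ and a real $\Delta>0$. For $n\ge k$ let $m=m(n)=\lfloor \Delta n\rfloor$ and let $V=(V_1,\dots,V_m)\sim\mathbf{P}_{\text{unif}}$. Then there is a sequence $\epsilon_n\to 0$ (as $n\to\infty$, depending only on $k$ and $\Delta$) such that for all $n\ge k$, $$\frac{\mathbf{E}[Z(V)^2]}{\mathbf{E}[Z(V)]^2}\le 1+\epsilon_n+\frac{1}{\mathbf{E}[Z(V)]}.$$
   Context: A $k$-flat of $\mathbb{F}_2^n$ is an affine subspace of dimension $n-k$; equivalently a set $\{x\in\mathbb{F}_2^n : \ell_i(x)=\varepsilon_i \ \forall i\in[k]\}$ where $\ell_1,\dots,\ell_k$ are linearly independent linear forms on $\mathbb{F}_2^n$ and $\varepsilon_1,\dots,\varepsilon_k\in\mathbb{F}_2$. Let $q_0$ be the uniform distribution on the set of all $k$-flats of $\mathbb{F}_2^n$, and $\mathbf{P}_{\text{unif}}:=q_0^{\otimes m}$ (i.e. $V_1,\dots,V_m$ i.i.d. uniform $k$-flats). For $V=(V_1,\dots,V_m)$, let $\mathcal{S}(V)=\mathbb{F}_2^n\setminus\bigcup_{j=1}^m V_j$ and $Z(V)=|\mathcal{S}(V)|$. Expectations are under $\mathbf{P}_{\text{unif}}$. *)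

theory Defs
  imports "HOL-Probability.Probability"
begin

text \<open>Points of F_2^n are boolean lists of length n (True = 1, False = 0).\<close>
definition cube :: "nat \<Rightarrow> bool list set" where
  "cube n = {x. length x = n}"

definition lform :: "nat \<Rightarrow> bool list \<Rightarrow> bool list \<Rightarrow> bool" where
  "lform n a x = odd (card {j. j < n \<and> a ! j \<and> x ! j})"

text \<open>Linear independence over F_2 of the forms a 0, ..., a (k-1) in F_2^n:
  no nonempty subfamily sums to zero (coefficients in F_2 are 0 or 1).\<close>
definition lin_indep_F2 :: "nat \<Rightarrow> nat \<Rightarrow> (nat \<Rightarrow> bool list) \<Rightarrow> bool" where
  "lin_indep_F2 n k a \<longleftrightarrow>
     (\<forall>S. S \<subseteq> {..<k} \<longrightarrow> S \<noteq> {} \<longrightarrow> (\<exists>j<n. odd (card {i\<in>S. a i ! j})))"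

definition flats :: "nat \<Rightarrow> nat \<Rightarrow> bool list set set" where
  "flats n k = {{x \<in> cube n. \<forall>i<k. lform n (a i) x = e i} | a e.
                  (\<forall>i<k. a i \<in> cube n) \<and> lin_indep_F2 n k a}"

definition P_unif :: "nat \<Rightarrow> nat \<Rightarrow> nat \<Rightarrow> (nat \<Rightarrow> bool list set) pmf" where
  "P_unif n k m = Pi_pmf {..<m} {} (\<lambda>_. pmf_of_set (flats n k))"

definition Zcount :: "nat \<Rightarrow> nat \<Rightarrow> (nat \<Rightarrow> bool list set) \<Rightarrow> nat" where
  "Zcount n m V = card (cube n - (\<Union>j<m. V j))"

end

theory Submission
  imports Defs
begin


definition parS :: "'a set \<Rightarrow> ('a \<Rightarrow> bool) \<Rightarrow> bool" where
  "parS S f = odd (card {i\<in>S. f i})"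

lemma parS_empty[simp]: "parS {} f = False" by (simp add: parS_def)

lemma parS_insert:
  assumes "finite S" "x \<notin> S" shows "parS (insert x S) f = (parS S f \<noteq> f x)"
proof (cases "f x")
  case True
  have "{i\<in>insert x S. f i} = insert x {i\<in>S. f i}" using True by auto
  moreover have "finite {i\<in>S. f i}" using assms by auto
  moreover have "x \<notin> {i\<in>S. f i}" using assms by auto
  ultimately show ?thesis using True by (simp add: parS_def)
next
  case False
  have "{i\<in>insert x S. f i} = {i\<in>S. f i}" using False by auto
  then show ?thesis using False by (simp add: parS_def)
qed

lemma parS_xor: "finite S \<Longrightarrow> parS S (\<lambda>i. f i \<noteq> g i) = (parS S f \<noteq> parS S g)"
  by (induction S rule: finite_induct) (auto simp: parS_insert)

lemma parS_and_const: "finite S \<Longrightarrow> parS S (\<lambda>i. f i \<and> c) = (parS S f \<and> c)"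
  by (induction S rule: finite_induct) (auto simp: parS_insert)

lemma parS_false[simp]: "parS S (\<lambda>_. False) = False" by (simp add: parS_def)

lemma parS_cong: "(\<And>i. i \<in> S \<Longrightarrow> f i = g i) \<Longrightarrow> parS S f = parS S g"
  unfolding parS_def by (metis (mono_tags, lifting) Collect_cong)

lemma parS_single: "finite S \<Longrightarrow> parS S (\<lambda>l. l = j \<and> c) = (j\<in>S \<and> c)"
  by (induction S rule: finite_induct) (auto simp: parS_insert)

lemma lform_par: "lform n a x = parS {..<n} (\<lambda>j. a!j \<and> x!j)"
  unfolding lform_def parS_def by (simp add: lessThan_def)

definition xorl :: "bool list \<Rightarrow> bool list \<Rightarrow> bool list" where
  "xorl x y = map2 (\<noteq>) x y"

lemma xorl_len[simp]: "length (xorl x y) = min (length x) (length y)"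
  by (simp add: xorl_def)

lemma xorl_nth[simp]: "j < length x \<Longrightarrow> j < length y \<Longrightarrow> xorl x y ! j = (x!j \<noteq> y!j)"
  by (simp add: xorl_def)

lemma xorl_cube: "x \<in> cube n \<Longrightarrow> y \<in> cube n \<Longrightarrow> xorl x y \<in> cube n"
  by (simp add: cube_def)

lemma xorl_xorl: "length x = length b \<Longrightarrow> xorl (xorl x b) b = x"
  by (intro nth_equalityI) auto

lemma lform_xor2: "length x = n \<Longrightarrow> length y = n \<Longrightarrow>
   lform n a (xorl x y) = (lform n a x \<noteq> lform n a y)"
proof -
  assume "length x = n" "length y = n"
  hence "lform n a (xorl x y) = parS {..<n} (\<lambda>j. (a!j \<and> x!j) \<noteq> (a!j \<and> y!j))"
    unfolding lform_par by (intro parS_cong) auto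
  thus ?thesis using parS_xor[of "{..<n}" "\<lambda>j. a!j \<and> x!j" "\<lambda>j. a!j \<and> y!j"] by (simp add: lform_par)
qed

lemma lform_xor1: "length a = n \<Longrightarrow> length b = n \<Longrightarrow>
   lform n (xorl a b) x = (lform n a x \<noteq> lform n b x)"
proof -
  assume "length a = n" "length b = n"
  hence "lform n (xorl a b) x = parS {..<n} (\<lambda>j. (a!j \<and> x!j) \<noteq> (b!j \<and> x!j))"
    unfolding lform_par by (intro parS_cong) auto
  thus ?thesis using parS_xor[of "{..<n}" "\<lambda>j. a!j \<and> x!j" "\<lambda>j. b!j \<and> x!j"] by (simp add: lform_par)
qed

definition zer :: "nat \<Rightarrow> bool list" where "zer n = replicate n False"
definition unit :: "nat \<Rightarrow> nat \<Rightarrow> bool list" where "unit n j = (replicate n False)[j := True]"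

lemma zer_cube[simp]: "zer n \<in> cube n" by (simp add: zer_def cube_def)
lemma unit_cube[simp]: "unit n j \<in> cube n" by (simp add: unit_def cube_def)

lemma lform_zer[simp]: "lform n a (zer n) = False"
  unfolding lform_def zer_def by (simp cong: conj_cong)

lemma lform_unit: "j < n \<Longrightarrow> lform n a (unit n j) = a!j"
proof -
  assume j: "j < n"
  have "lform n a (unit n j) = parS {..<n} (\<lambda>l. l = j \<and> a!j)"
    unfolding lform_par unit_def using j by (intro parS_cong) (auto simp: nth_list_update)
  thus ?thesis using j by (simp add: parS_single)
qed

lemma xorl_zer: "length x = n \<Longrightarrow> xorl (zer n) x = x"
  by (intro nth_equalityI) (auto simp: zer_def)



lemma indep_parS: "lin_indep_F2 n k a \<longleftrightarrow>
     (\<forall>S. S \<subseteq> {..<k} \<longrightarrow> S \<noteq> {} \<longrightarrow> (\<exists>j<n. parS S (\<lambda>i. a i ! j)))"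
  unfolding lin_indep_F2_def parS_def by simp

lemma surj_forms:
  "lin_indep_F2 n k a \<Longrightarrow> (\<forall>i<k. a i \<in> cube n) \<Longrightarrow> \<exists>x\<in>cube n. \<forall>i<k. lform n (a i) x = t i"
proof (induction k arbitrary: a t)
  case 0
  then show ?case by (intro bexI[of _ "zer n"]) auto
next
  case (Suc k)
  have ind: "\<And>S. S \<subseteq> {..<Suc k} \<Longrightarrow> S \<noteq> {} \<Longrightarrow> \<exists>j<n. parS S (\<lambda>i. a i ! j)"
    using Suc.prems(1) by (simp add: indep_parS)
  obtain j where j: "j < n" "parS {k} (\<lambda>i. a i ! j)" using ind[of "{k}"] by auto
  hence akj: "a k ! j" by (simp add: parS_insert)
  have len: "\<And>i. i < Suc k \<Longrightarrow> length (a i) = n" using Suc.prems(2) by (auto simp: cube_def)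
  define a' where "a' i = (if a i ! j then xorl (a i) (a k) else a i)" for i
  define t' where "t' i = (if a i ! j then (t i \<noteq> t k) else t i)" for i
  have a'nth: "a' i ! l = (a i ! l \<noteq> (a i ! j \<and> a k ! l))" if "i < k" "l < n" for i l
    using that len[of i] len[of k] by (auto simp: a'_def)
  have a'cube: "\<forall>i<k. a' i \<in> cube n" using len by (auto simp: a'_def cube_def)
  have "lin_indep_F2 n k a'"
    unfolding indep_parS
  proof (intro allI impI)
    fix S assume S: "S \<subseteq> {..<k}" "S \<noteq> {}"
    have fS: "finite S" using S finite_subset by blast
    define c where "c = parS S (\<lambda>i. a i ! j)"
    define S' where "S' = (if c then insert k S else S)"
    have "S' \<subseteq> {..<Suc k}" "S' \<noteq> {}" using S by (auto simp: S'_def)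
    then obtain l where l: "l < n" "parS S' (\<lambda>i. a i ! l)" using ind by blast
    have kS: "k \<notin> S" using S by auto
    have "parS S (\<lambda>i. a' i ! l) = parS S (\<lambda>i. a i ! l \<noteq> (a i ! j \<and> a k ! l))"
      using S l by (intro parS_cong) (auto simp: a'nth)
    also have "\<dots> = (parS S (\<lambda>i. a i ! l) \<noteq> (c \<and> a k ! l))"
      using parS_xor[OF fS, of "\<lambda>i. a i ! l" "\<lambda>i. a i ! j \<and> a k ! l"]
        parS_and_const[OF fS, of "\<lambda>i. a i ! j" "a k ! l"] by (simp add: c_def)
    also have "\<dots> = parS S' (\<lambda>i. a i ! l)"
      using fS kS by (auto simp: S'_def parS_insert)
    finally show "\<exists>j<n. parS S (\<lambda>i. a' i ! j)" using l by blast
  qed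
  from Suc.IH[OF this a'cube, of t'] obtain x' where x': "x' \<in> cube n" "\<forall>i<k. lform n (a' i) x' = t' i"
    by blast
  define x where "x = (if lform n (a k) x' = t k then x' else xorl x' (unit n j))"
  have xc: "x \<in> cube n" using x' by (simp add: x_def xorl_cube)
  have lx': "length x' = n" using x' by (simp add: cube_def)
  have lu: "length (unit n j) = n" by (simp add: unit_def)
  have a'j: "a' i ! j = False" if "i < k" for i using a'nth[OF that j(1)] akj by auto
  have e1: "lform n (a' i) x = t' i" if "i < k" for i
    using x'(2) that a'j[OF that] lx' lu j(1) by (auto simp: x_def lform_xor2 lform_unit)
  have e2: "lform n (a k) x = t k"
    using akj lx' lu j(1) by (auto simp: x_def lform_xor2 lform_unit)
  have "lform n (a i) x = t i" if "i < Suc k" for i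
  proof (cases "i = k")
    case True then show ?thesis using e2 by simp
  next
    case False
    hence ik: "i < k" using that by simp
    show ?thesis
    proof (cases "a i ! j")
      case True
      have "lform n (a' i) x = (lform n (a i) x \<noteq> lform n (a k) x)"
        using True len[of i] len[of k] ik by (simp add: a'_def lform_xor1)
      thus ?thesis using e1[OF ik] e2 True by (auto simp: t'_def)
    next
      case False
      thus ?thesis using e1[OF ik] by (simp add: a'_def t'_def)
    qed
  qed
  thus ?case using xc by blast
qed



definition fl :: "nat \<Rightarrow> nat \<Rightarrow> (nat \<Rightarrow> bool list) \<Rightarrow> (nat \<Rightarrow> bool) \<Rightarrow> bool list set" where
  "fl n k a e = {x \<in> cube n. \<forall>i<k. lform n (a i) x = e i}"

lemma flats_fl: "flats n k = {fl n k a e | a e. (\<forall>i<k. a i \<in> cube n) \<and> lin_indep_F2 n k a}"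
  unfolding flats_def fl_def by simp

lemma cube_eq: "cube n = {xs. set xs \<subseteq> UNIV \<and> length xs = n}" by (simp add: cube_def)

lemma finite_cube[simp]: "finite (cube n)"
  unfolding cube_eq by (rule finite_lists_length_eq) simp

lemma card_cube: "card (cube n) = 2^n"
  unfolding cube_eq by (subst card_lists_length_eq) simp_all

lemma fl_card:
  assumes ind: "lin_indep_F2 n k a" and ac: "\<forall>i<k. a i \<in> cube n"
  shows "2^k * card (fl n k a e) = 2^n"
proof -
  define K where "K = fl n k a (\<lambda>_. False)"
  have cK: "card (fl n k a e') = card K" for e'
  proof -
    obtain x0 where x0: "x0 \<in> cube n" "\<forall>i<k. lform n (a i) x0 = e' i"
      using surj_forms[OF ind ac] by blast
    have l0: "length x0 = n" using x0 by (simp add: cube_def)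
    have "inj_on (\<lambda>z. xorl z x0) K"
    proof (rule inj_onI)
      fix z z' assume "z \<in> K" "z' \<in> K" and eq: "xorl z x0 = xorl z' x0"
      hence "length z = n" "length z' = n" by (auto simp: K_def fl_def cube_def)
      thus "z = z'" using eq l0 xorl_xorl by metis
    qed
    moreover have "(\<lambda>z. xorl z x0) ` K = fl n k a e'"
    proof
      show "(\<lambda>z. xorl z x0) ` K \<subseteq> fl n k a e'"
        using x0 l0 by (auto simp: K_def fl_def xorl_cube lform_xor2 cube_def)
      show "fl n k a e' \<subseteq> (\<lambda>z. xorl z x0) ` K"
      proof
        fix y assume y: "y \<in> fl n k a e'"
        hence ly: "length y = n" by (simp add: fl_def cube_def)
        have "xorl y x0 \<in> K" using y x0 l0 ly by (auto simp: K_def fl_def xorl_cube lform_xor2 cube_def)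
        moreover have "y = xorl (xorl y x0) x0" using ly l0 by (simp add: xorl_xorl)
        ultimately show "y \<in> (\<lambda>z. xorl z x0) ` K" by blast
      qed
    qed
    ultimately show ?thesis by (metis card_image)
  qed
  define E where "E = PiE {..<k} (\<lambda>_. UNIV :: bool set)"
  have cube_un: "cube n = (\<Union>e\<in>E. fl n k a e)"
  proof
    show "cube n \<subseteq> (\<Union>e\<in>E. fl n k a e)"
    proof
      fix x assume x: "x \<in> cube n"
      have "restrict (\<lambda>i. lform n (a i) x) {..<k} \<in> E" by (simp add: E_def)
      moreover have "x \<in> fl n k a (restrict (\<lambda>i. lform n (a i) x) {..<k})" using x by (simp add: fl_def)
      ultimately show "x \<in> (\<Union>e\<in>E. fl n k a e)" by blast
    qed
  qed (auto simp: fl_def)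
  have disj: "\<forall>e\<in>E. \<forall>e'\<in>E. e \<noteq> e' \<longrightarrow> fl n k a e \<inter> fl n k a e' = {}"
  proof (intro ballI impI)
    fix e e' assume e: "e \<in> E" "e' \<in> E" "e \<noteq> e'"
    then obtain i where "i < k" "e i \<noteq> e' i" unfolding E_def
      using PiE_ext[of e "{..<k}" "\<lambda>_. UNIV" e'] by blast
    thus "fl n k a e \<inter> fl n k a e' = {}" by (auto simp: fl_def)
  qed
  have fE: "finite E" by (simp add: E_def finite_PiE)
  have "card (cube n) = (\<Sum>e\<in>E. card (fl n k a e))"
    unfolding cube_un by (rule card_UN_disjoint[OF fE _ disj]) (simp add: fl_def)
  also have "\<dots> = card E * card K" using cK by simp
  also have "card E = 2^k" by (simp add: E_def card_PiE)
  finally show ?thesis using cK[of e] card_cube[of n] by simp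
qed



lemma flats_sub: "V \<in> flats n k \<Longrightarrow> V \<subseteq> cube n"
  by (auto simp: flats_fl fl_def)

lemma finite_flats: "finite (flats n k)"
proof -
  have "flats n k \<subseteq> Pow (cube n)" using flats_sub by blast
  moreover have "finite (Pow (cube n))" by simp
  ultimately show ?thesis by (rule finite_subset)
qed

lemma flats_card: "V \<in> flats n k \<Longrightarrow> 2^k * card V = 2^n"
  by (auto simp: flats_fl intro: fl_card)

lemma flats_nonempty: "k \<le> n \<Longrightarrow> flats n k \<noteq> {}"
proof -
  assume kn: "k \<le> n"
  have "lin_indep_F2 n k (unit n)"
    unfolding indep_parS
  proof (intro allI impI)
    fix S :: "nat set" assume S: "S \<subseteq> {..<k}" "S \<noteq> {}"
    then obtain j where j: "j \<in> S" by blast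
    have jn: "j < n" using S j kn by auto
    have un: "unit n i ! j = (i = j)" if "i < n" for i
      using that jn by (auto simp: unit_def nth_list_update)
    have "\<forall>i\<in>S. i < n" using S kn by auto
    hence "{i\<in>S. unit n i ! j} = {j}" using j un by blast
    hence "parS S (\<lambda>i. unit n i ! j)" by (simp add: parS_def)
    moreover have "j < n" using S j kn by auto
    ultimately show "\<exists>j<n. parS S (\<lambda>i. unit n i ! j)" by blast
  qed
  moreover have "\<forall>i<k. unit n i \<in> cube n" by simp
  ultimately have "fl n k (unit n) (\<lambda>_. False) \<in> flats n k" unfolding flats_fl by blast
  thus ?thesis by blast
qed

lemma count_inv:
  assumes g: "\<forall>x\<in>cube n. g x \<in> cube n \<and> g (g x) = x"
    and FV: "\<forall>V\<in>F. V \<subseteq> cube n \<and> g`V \<in> F" and x: "x\<in>cube n" and y: "y\<in>cube n"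
  shows "card {V\<in>F. g x \<in> V \<and> g y \<in> V} = card {V\<in>F. x\<in>V \<and> y\<in>V}"
proof -
  have gg: "g ` (g ` V) = V" if "V \<subseteq> cube n" for V
  proof -
    have "g ` (g ` V) = (\<lambda>z. g (g z)) ` V" by (simp add: image_image)
    also have "\<dots> = id ` V" using g that by (intro image_cong) auto
    finally show ?thesis by simp
  qed
  define P where "P = {V\<in>F. x\<in>V \<and> y\<in>V}"
  define Q where "Q = {V\<in>F. g x \<in> V \<and> g y \<in> V}"
  have inj: "inj_on (image g) P"
  proof (rule inj_onI)
    fix V W assume V: "V \<in> P" and W: "W \<in> P" and e: "g ` V = g ` W"
    have "V \<subseteq> cube n" "W \<subseteq> cube n" using V W FV by (auto simp: P_def)
    hence "V = g ` (g ` V)" "W = g ` (g ` W)" using gg by auto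
    thus "V = W" using e by simp
  qed
  have s1: "image g ` P \<subseteq> Q" using FV by (auto simp: P_def Q_def)
  have s2: "Q \<subseteq> image g ` P"
  proof
    fix W assume W: "W \<in> Q"
    have "g (g x) = x" "g (g y) = y" using g x y by auto
    moreover have "g x \<in> W" "g y \<in> W" using W by (auto simp: Q_def)
    ultimately have "x \<in> g ` W" "y \<in> g ` W" by (metis image_eqI)+
    hence "g ` W \<in> P" using FV W by (auto simp: P_def Q_def)
    moreover have "W = g ` (g ` W)" using gg FV W by (auto simp: Q_def)
    ultimately show "W \<in> image g ` P" by blast
  qed
  have "card (image g ` P) = card P" using inj by (rule card_image)
  moreover have "image g ` P = Q" using s1 s2 by (rule subset_antisym)
  ultimately show ?thesis by (simp add: P_def Q_def)
qed


lemma transl_flats: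
  assumes b: "b \<in> cube n" and V: "V \<in> flats n k"
  shows "(\<lambda>x. xorl x b) ` V \<in> flats n k"
proof -
  obtain a e where V: "V = fl n k a e" and a: "\<forall>i<k. a i \<in> cube n" "lin_indep_F2 n k a"
    using V by (auto simp: flats_fl)
  have lb: "length b = n" using b by (simp add: cube_def)
  have "(\<lambda>x. xorl x b) ` fl n k a e = fl n k a (\<lambda>i. e i \<noteq> lform n (a i) b)"
  proof
    show "(\<lambda>x. xorl x b) ` fl n k a e \<subseteq> fl n k a (\<lambda>i. e i \<noteq> lform n (a i) b)"
      using b lb by (auto simp: fl_def xorl_cube lform_xor2 cube_def)
    show "fl n k a (\<lambda>i. e i \<noteq> lform n (a i) b) \<subseteq> (\<lambda>x. xorl x b) ` fl n k a e"
    proof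
      fix y assume y: "y \<in> fl n k a (\<lambda>i. e i \<noteq> lform n (a i) b)"
      hence ly: "length y = n" by (simp add: fl_def cube_def)
      have "xorl y b \<in> fl n k a e" using y b lb ly by (auto simp: fl_def xorl_cube lform_xor2 cube_def)
      moreover have "y = xorl (xorl y b) b" using ly lb by (simp add: xorl_xorl)
      ultimately show "y \<in> (\<lambda>x. xorl x b) ` fl n k a e" by blast
    qed
  qed
  thus ?thesis using a V by (auto simp: flats_fl)
qed

definition tv :: "nat \<Rightarrow> nat \<Rightarrow> bool list \<Rightarrow> bool list" where
  "tv i j x = x[j := (x!j \<noteq> x!i)]"

lemma tv_cube: "x \<in> cube n \<Longrightarrow> tv i j x \<in> cube n" by (simp add: tv_def cube_def)

lemma tv_tv: "i \<noteq> j \<Longrightarrow> tv i j (tv i j x) = x"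
proof (cases "j < length x")
  case True
  assume ij: "i \<noteq> j"
  have e: "((x!j \<noteq> x!i) \<noteq> x!i) = x!j" by auto
  show ?thesis using True ij by (simp add: tv_def nth_list_update e del: not_iff)
next
  case False
  thus ?thesis by (simp add: tv_def list_update_beyond)
qed

lemma lform_tv:
  assumes "i \<noteq> j" "i < n" "j < n" "length a = n" "length y = n"
  shows "lform n a (tv i j y) = lform n (a[i := (a!i \<noteq> a!j)]) y"
proof -
  have "lform n a (tv i j y) = parS {..<n} (\<lambda>l. (a!l \<and> y!l) \<noteq> (l = j \<and> (a!j \<and> y!i)))"
    unfolding lform_par tv_def using assms by (intro parS_cong) (auto simp: nth_list_update)
  also have "\<dots> = (parS {..<n} (\<lambda>l. a!l \<and> y!l) \<noteq> (a!j \<and> y!i))"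
    using parS_xor[of "{..<n}" "\<lambda>l. a!l \<and> y!l" "\<lambda>l. l = j \<and> (a!j \<and> y!i)"]
      parS_single[of "{..<n}" j "a!j \<and> y!i"] assms by simp
  also have "\<dots> = parS {..<n} (\<lambda>l. (a!l \<and> y!l) \<noteq> (l = i \<and> (a!j \<and> y!i)))"
    using parS_xor[of "{..<n}" "\<lambda>l. a!l \<and> y!l" "\<lambda>l. l = i \<and> (a!j \<and> y!i)"]
      parS_single[of "{..<n}" i "a!j \<and> y!i"] assms by simp
  also have "\<dots> = lform n (a[i := (a!i \<noteq> a!j)]) y"
    unfolding lform_par using assms by (intro parS_cong) (auto simp: nth_list_update)
  finally show ?thesis .
qed

lemma tv_flats:
  assumes ij: "i \<noteq> j" "i < n" "j < n" and V: "V \<in> flats n k"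
  shows "tv i j ` V \<in> flats n k"
proof -
  obtain a e where V: "V = fl n k a e" and a: "\<forall>i<k. a i \<in> cube n" "lin_indep_F2 n k a"
    using V by (auto simp: flats_fl)
  define a' where "a' r = (a r)[i := (a r ! i \<noteq> a r ! j)]" for r
  have la: "\<And>r. r < k \<Longrightarrow> length (a r) = n" using a by (auto simp: cube_def)
  have a'c: "\<forall>r<k. a' r \<in> cube n" using la by (auto simp: a'_def cube_def)
  have lf: "lform n (a' r) y = lform n (a r) (tv i j y)" if "r < k" "length y = n" for r y
    using lform_tv[OF ij la[OF that(1)] that(2)] by (simp add: a'_def)
  have "lin_indep_F2 n k a'"
    unfolding indep_parS
  proof (intro allI impI)
    fix S assume S: "S \<subseteq> {..<k}" "S \<noteq> {}"
    have fS: "finite S" using S finite_subset by blast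
    obtain l0 where l0: "l0 < n" "parS S (\<lambda>r. a r ! l0)" using a(2) S by (auto simp: indep_parS)
    have nth': "parS S (\<lambda>r. a' r ! l) = (if l = i then (parS S (\<lambda>r. a r ! i) \<noteq> parS S (\<lambda>r. a r ! j))
                 else parS S (\<lambda>r. a r ! l))" if "l < n" for l
    proof -
      have "parS S (\<lambda>r. a' r ! l) = parS S (\<lambda>r. if l = i then (a r ! i \<noteq> a r ! j) else a r ! l)"
        using S la that by (intro parS_cong) (auto simp: a'_def nth_list_update)
      thus ?thesis using parS_xor[OF fS, of "\<lambda>r. a r ! i" "\<lambda>r. a r ! j"] by auto
    qed
    show "\<exists>l<n. parS S (\<lambda>r. a' r ! l)"
    proof (cases "l0 = i")
      case False thus ?thesis using l0 nth' by auto
    next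
      case True
      thus ?thesis using l0 nth'[of i] nth'[of j] ij by (cases "parS S (\<lambda>r. a r ! j)") auto
    qed
  qed
  have "tv i j ` fl n k a e = fl n k a' e"
  proof
    show "tv i j ` fl n k a e \<subseteq> fl n k a' e"
    proof
      fix y assume "y \<in> tv i j ` fl n k a e"
      then obtain x where x: "x \<in> fl n k a e" "y = tv i j x" by blast
      hence ly: "length y = n" "y \<in> cube n" by (auto simp: fl_def cube_def tv_def)
      show "y \<in> fl n k a' e" using x ly lf tv_tv[OF ij(1)] by (auto simp: fl_def)
    qed
    show "fl n k a' e \<subseteq> tv i j ` fl n k a e"
    proof
      fix y assume y: "y \<in> fl n k a' e"
      hence ly: "length y = n" by (simp add: fl_def cube_def)
      have "tv i j y \<in> fl n k a e" using y ly lf by (auto simp: fl_def tv_cube)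
      moreover have "y = tv i j (tv i j y)" using tv_tv[OF ij(1)] by simp
      ultimately show "y \<in> tv i j ` fl n k a e" by blast
    qed
  qed
  thus ?thesis using V a'c \<open>lin_indep_F2 n k a'\<close> by (auto simp: flats_fl)
qed



definition cnt2 :: "nat \<Rightarrow> nat \<Rightarrow> bool list \<Rightarrow> bool list \<Rightarrow> nat" where
  "cnt2 n k x y = card {V\<in>flats n k. x\<in>V \<and> y\<in>V}"

lemma inv_transl:
  assumes "b \<in> cube n" "x \<in> cube n" "y \<in> cube n"
  shows "cnt2 n k (xorl x b) (xorl y b) = cnt2 n k x y"
  unfolding cnt2_def
proof (rule count_inv[where g = "\<lambda>z. xorl z b"])
  show "\<forall>x\<in>cube n. xorl x b \<in> cube n \<and> xorl (xorl x b) b = x"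
    using assms(1) by (auto simp: xorl_cube xorl_xorl cube_def)
  show "\<forall>V\<in>flats n k. V \<subseteq> cube n \<and> (\<lambda>z. xorl z b) ` V \<in> flats n k"
    using assms(1) flats_sub transl_flats by blast
qed (use assms in auto)

lemma inv_tv:
  assumes "i \<noteq> j" "i < n" "j < n" "x \<in> cube n" "y \<in> cube n"
  shows "cnt2 n k (tv i j x) (tv i j y) = cnt2 n k x y"
  unfolding cnt2_def
proof (rule count_inv[where g = "tv i j"])
  show "\<forall>x\<in>cube n. tv i j x \<in> cube n \<and> tv i j (tv i j x) = x"
    using assms(1) by (auto simp: tv_cube tv_tv)
  show "\<forall>V\<in>flats n k. V \<subseteq> cube n \<and> tv i j ` V \<in> flats n k"
    using assms(1-3) flats_sub tv_flats by blast
qed (use assms in auto)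

lemma xorl_comm: "length x = length y \<Longrightarrow> xorl x y = xorl y x"
  by (intro nth_equalityI) auto

lemma A_const: "x \<in> cube n \<Longrightarrow> cnt2 n k x x = cnt2 n k (zer n) (zer n)"
proof -
  assume x: "x \<in> cube n"
  have "xorl (zer n) x = x" using x by (simp add: xorl_zer cube_def)
  thus ?thesis using inv_transl[of x n "zer n" "zer n" k] x by simp
qed

lemma B_shift: "x \<in> cube n \<Longrightarrow> y \<in> cube n \<Longrightarrow> cnt2 n k x y = cnt2 n k (zer n) (xorl x y)"
proof -
  assume x: "x \<in> cube n" and y: "y \<in> cube n"
  have l: "length x = n" "length y = n" using x y by (auto simp: cube_def)
  have "xorl x y = xorl y x" using l by (simp add: xorl_comm)
  hence "xorl (xorl x y) x = y" using l by (simp add: xorl_xorl)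
  moreover have "xorl (zer n) x = x" using l by (simp add: xorl_zer)
  ultimately show ?thesis using inv_transl[of x n "zer n" "xorl x y" k] x y
    by (simp add: xorl_cube)
qed

lemma tv_zer: "i < n \<Longrightarrow> tv i j (zer n) = zer n"
  by (cases "j < n") (auto simp: tv_def zer_def list_update_beyond list_update_same_conv)

lemma B_unit: assumes "i < n" shows "cnt2 n k (zer n) (unit n i) = cnt2 n k (zer n) (unit n 0)"
proof (cases "i = 0")
  case True thus ?thesis by simp
next
  case False
  define d1 where "d1 = (unit n i)[0 := True]"
  have "tv i 0 (unit n i) = d1"
    using assms False by (intro nth_equalityI) (auto simp: tv_def d1_def unit_def nth_list_update)
  hence e1: "cnt2 n k (zer n) (unit n i) = cnt2 n k (zer n) d1"
    using inv_tv[of i 0 n "zer n" "unit n i" k] assms False by (simp add: tv_zer)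
  have d1c: "d1 \<in> cube n" by (simp add: d1_def unit_def cube_def)
  have "tv 0 i d1 = unit n 0"
    using assms False by (intro nth_equalityI) (auto simp: tv_def d1_def unit_def nth_list_update)
  hence "cnt2 n k (zer n) d1 = cnt2 n k (zer n) (unit n 0)"
    using inv_tv[of 0 i n "zer n" d1 k] assms False d1c by (simp add: tv_zer)
  thus ?thesis using e1 by simp
qed

lemma B_const_aux:
  "\<forall>d. card {l. l < n \<and> d ! l} = w \<longrightarrow> d \<in> cube n \<longrightarrow> d \<noteq> zer n \<longrightarrow>
     cnt2 n k (zer n) d = cnt2 n k (zer n) (unit n 0)"
proof (induction w rule: less_induct)
  case (less w)
  show ?case
  proof (intro allI impI)
    fix d assume w: "card {l. l < n \<and> d ! l} = w" and d: "d \<in> cube n" and nz: "d \<noteq> zer n"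
    have ld: "length d = n" using d by (simp add: cube_def)
    obtain i where i: "i < n" "d ! i"
    proof -
      have "\<exists>i<n. d ! i"
      proof (rule ccontr)
        assume "\<not> (\<exists>i<n. d ! i)"
        hence "\<forall>i<n. \<not> d ! i" by blast
      hence "d = zer n" using ld by (intro nth_equalityI) (simp_all add: zer_def)
        thus False using nz by simp
      qed
      thus ?thesis using that by blast
    qed
    show "cnt2 n k (zer n) d = cnt2 n k (zer n) (unit n 0)"
    proof (cases "\<exists>j<n. j \<noteq> i \<and> d ! j")
      case True
      then obtain j where j: "j < n" "j \<noteq> i" "d ! j" by blast
      define d' where "d' = tv i j d"
      have d'e: "d' = d[j := False]" using i j by (simp add: d'_def tv_def)
      have d'c: "d' \<in> cube n" using d by (simp add: d'_def tv_cube)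
      have d'nz: "d' \<noteq> zer n"
      proof
        assume "d' = zer n"
        hence "d' ! i = False" using i by (simp add: zer_def)
        moreover have "d' ! i = d ! i" using j(2) by (simp add: d'e)
        ultimately show False using i by simp
      qed
      have sub: "{l. l < n \<and> d' ! l} \<subset> {l. l < n \<and> d ! l}"
      proof
        have "d' ! l \<Longrightarrow> d ! l" if "l < n" for l
          using that ld j(1) by (cases "l = j") (simp_all add: d'e)
        thus "{l. l < n \<and> d' ! l} \<subseteq> {l. l < n \<and> d ! l}" by blast
        show "{l. l < n \<and> d' ! l} \<noteq> {l. l < n \<and> d ! l}" proof
          assume "{l. l < n \<and> d' ! l} = {l. l < n \<and> d ! l}"
          moreover have "j \<notin> {l. l < n \<and> d' ! l}" using j ld by (simp add: d'e)
          moreover have "j \<in> {l. l < n \<and> d ! l}" using j by simp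
          ultimately show False by simp
        qed
      qed
      have "card {l. l < n \<and> d' ! l} < w"
        using psubset_card_mono[OF _ sub] w by simp
      from less.IH[OF this] have "cnt2 n k (zer n) d' = cnt2 n k (zer n) (unit n 0)"
        using d'c d'nz by (drule_tac spec[of _ d']) simp
      moreover have "cnt2 n k (zer n) d' = cnt2 n k (zer n) d"
        using inv_tv[of i j n "zer n" d k] i j d by (simp add: tv_zer d'_def)
      ultimately show ?thesis by simp
    next
      case False
      hence o: "\<forall>j<n. j \<noteq> i \<longrightarrow> \<not> d ! j" by blast
      have "d = unit n i"
      proof (intro nth_equalityI)
        show "length d = length (unit n i)" using ld by (simp add: unit_def)
        fix l assume "l < length d"
        thus "d ! l = unit n i ! l" using o i ld by (cases "l = i") (simp_all add: unit_def)
      qed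
      thus ?thesis using B_unit[OF i(1), of k] by simp
    qed
  qed
qed

lemma B_const: "d \<in> cube n \<Longrightarrow> d \<noteq> zer n \<Longrightarrow> cnt2 n k (zer n) d = cnt2 n k (zer n) (unit n 0)"
proof -
  assume "d \<in> cube n" "d \<noteq> zer n"
  thus ?thesis using B_const_aux[of n "card {l. l < n \<and> d ! l}" k] by (drule_tac spec[of _ d]) simp
qed

lemma B_pair: "x \<in> cube n \<Longrightarrow> y \<in> cube n \<Longrightarrow> x \<noteq> y \<Longrightarrow> cnt2 n k x y = cnt2 n k (zer n) (unit n 0)"
proof -
  assume x: "x \<in> cube n" and y: "y \<in> cube n" and ne: "x \<noteq> y"
  have "xorl x y \<noteq> zer n"
  proof
    assume h: "xorl x y = zer n"
    have "x = y" using x y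
    proof (intro nth_equalityI)
      show "length x = length y" using x y by (simp add: cube_def)
      fix l assume "l < length x"
      hence "xorl x y ! l = False" using h x by (simp add: zer_def cube_def)
      thus "x ! l = y ! l" using \<open>l < length x\<close> x y by (simp add: cube_def)
    qed
    thus False using ne by simp
  qed
  thus ?thesis using B_shift[OF x y] B_const[of "xorl x y" n k] x y by (simp add: xorl_cube)
qed



lemma card_as_sum: "finite C \<Longrightarrow> V \<subseteq> C \<Longrightarrow> card V = (\<Sum>x\<in>C. if x \<in> V then 1 else 0)"
proof -
  assume C: "finite C" and V: "V \<subseteq> C"
  have "(\<Sum>x\<in>C. if x \<in> V then 1 else (0::nat)) = (\<Sum>x\<in>{x\<in>C. x \<in> V}. 1)"
    using C by (simp add: sum.If_cases Int_def conj_commute)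
  also have "{x\<in>C. x \<in> V} = V" using V by auto
  finally show ?thesis by simp
qed

lemma cnt2_sum: "cnt2 n k x y = (\<Sum>V\<in>flats n k. if x \<in> V \<and> y \<in> V then 1 else 0)"
proof -
  have "(\<Sum>V\<in>flats n k. if x \<in> V \<and> y \<in> V then 1 else (0::nat)) = (\<Sum>V\<in>{V\<in>flats n k. x \<in> V \<and> y \<in> V}. 1)"
    using finite_flats[of n k] by (simp add: sum.If_cases Int_def conj_commute)
  thus ?thesis by (simp add: cnt2_def)
qed

lemma double1: "(\<Sum>V\<in>flats n k. card V) = (\<Sum>x\<in>cube n. cnt2 n k x x)"
proof -
  have "(\<Sum>V\<in>flats n k. card V) = (\<Sum>V\<in>flats n k. \<Sum>x\<in>cube n. if x \<in> V then 1 else 0)"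
    by (intro sum.cong refl card_as_sum) (auto simp: flats_sub)
  also have "\<dots> = (\<Sum>x\<in>cube n. \<Sum>V\<in>flats n k. if x \<in> V then 1 else 0)" by (rule sum.swap)
  also have "\<dots> = (\<Sum>x\<in>cube n. cnt2 n k x x)" by (simp add: cnt2_sum)
  finally show ?thesis .
qed

lemma double2: "(\<Sum>V\<in>flats n k. card V * card V) = (\<Sum>x\<in>cube n. \<Sum>y\<in>cube n. cnt2 n k x y)"
proof -
  have "card V * card V = (\<Sum>x\<in>cube n. \<Sum>y\<in>cube n. if x \<in> V \<and> y \<in> V then 1 else 0)"
    if "V \<in> flats n k" for V
  proof -
    have "card V * card V = (\<Sum>x\<in>cube n. if x \<in> V then 1 else 0) * (\<Sum>y\<in>cube n. if y \<in> V then 1 else 0)"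
      using card_as_sum[OF finite_cube flats_sub[OF that]] by simp
    also have "\<dots> = (\<Sum>x\<in>cube n. \<Sum>y\<in>cube n. (if x \<in> V then 1 else 0) * (if y \<in> V then 1 else (0::nat)))"
      by (rule sum_product)
    also have "\<dots> = (\<Sum>x\<in>cube n. \<Sum>y\<in>cube n. if x \<in> V \<and> y \<in> V then 1 else 0)"
      by (intro sum.cong refl) auto
    finally show ?thesis .
  qed
  hence "(\<Sum>V\<in>flats n k. card V * card V) =
      (\<Sum>V\<in>flats n k. \<Sum>x\<in>cube n. \<Sum>y\<in>cube n. if x \<in> V \<and> y \<in> V then 1 else 0)"
    by (intro sum.cong refl) auto
  also have "\<dots> = (\<Sum>x\<in>cube n. \<Sum>V\<in>flats n k. \<Sum>y\<in>cube n. if x \<in> V \<and> y \<in> V then 1 else 0)"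
    by (rule sum.swap)
  also have "\<dots> = (\<Sum>x\<in>cube n. \<Sum>y\<in>cube n. \<Sum>V\<in>flats n k. if x \<in> V \<and> y \<in> V then 1 else 0)"
    by (intro sum.cong refl sum.swap)
  also have "\<dots> = (\<Sum>x\<in>cube n. \<Sum>y\<in>cube n. cnt2 n k x y)" by (simp add: cnt2_sum)
  finally show ?thesis .
qed

lemma neg_corr:
  assumes k: "1 \<le> k" "k \<le> n" and x: "x \<in> cube n" and y: "y \<in> cube n" and ne: "x \<noteq> y"
  shows "real (cnt2 n k x y) * real (card (flats n k)) \<le> real (cnt2 n k x x) * real (cnt2 n k y y)"
proof -
  define \<alpha> where "\<alpha> = cnt2 n k (zer n) (zer n)"
  define \<beta> where "\<beta> = cnt2 n k (zer n) (unit n 0)"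
  define N where "N = (2::nat)^n"
  define s where "s = (2::nat)^n div 2^k"
  define f where "f = card (flats n k)"
  have cV: "card V = s" if "V \<in> flats n k" for V
  proof -
    have h: "2^k * card V = 2^n" using flats_card[OF that] .
    have "card V = (2^k * card V) div 2^k" by simp
    thus ?thesis using h by (simp add: s_def)
  qed
  have "(2::nat)^1 \<le> 2^n" using k by (intro power_increasing) auto
  hence N2: "N \<ge> 2" by (simp add: N_def)
  have sN: "s \<le> N"
  proof (cases "flats n k = {}")
    case True
    thus ?thesis by (simp add: s_def N_def)
  next
    case False
    then obtain V where V: "V \<in> flats n k" by blast
    have "card V \<le> card (cube n)" by (rule card_mono[OF finite_cube flats_sub[OF V]])
    thus ?thesis using cV[OF V] card_cube[of n] by (simp add: N_def)
  qed
  have sumc: "(\<Sum>V\<in>flats n k. card V) = f * s"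
  proof -
    have "(\<Sum>V\<in>flats n k. card V) = (\<Sum>V\<in>flats n k. s)" by (intro sum.cong refl cV)
    thus ?thesis by (simp add: f_def)
  qed
  have sumc2: "(\<Sum>V\<in>flats n k. card V * card V) = f * (s * s)"
  proof -
    have "(\<Sum>V\<in>flats n k. card V * card V) = (\<Sum>V\<in>flats n k. s * s)" by (intro sum.cong refl) (simp add: cV)
    thus ?thesis by (simp add: f_def)
  qed
  have sA: "(\<Sum>x\<in>cube n. cnt2 n k x x) = N * \<alpha>"
  proof -
    have "(\<Sum>x\<in>cube n. cnt2 n k x x) = (\<Sum>x\<in>cube n. \<alpha>)"
      by (intro sum.cong refl) (unfold \<alpha>_def, rule A_const)
    thus ?thesis using card_cube[of n] by (simp add: N_def)
  qed
  have e1: "f * s = N * \<alpha>" using double1[of n k] sumc sA by simp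
  have row: "(\<Sum>y\<in>cube n. cnt2 n k x y) = \<alpha> + (N - 1) * \<beta>" if xc: "x \<in> cube n" for x
  proof -
    have "(\<Sum>y\<in>cube n. cnt2 n k x y) = cnt2 n k x x + (\<Sum>y\<in>cube n - {x}. cnt2 n k x y)"
      using xc by (simp add: sum.remove)
    also have "(\<Sum>y\<in>cube n - {x}. cnt2 n k x y) = (\<Sum>y\<in>cube n - {x}. \<beta>)"
    proof (intro sum.cong refl)
      fix y assume "y \<in> cube n - {x}"
      thus "cnt2 n k x y = \<beta>" unfolding \<beta>_def using B_pair[OF xc, of y k] by blast
    qed
    also have "\<dots> = (N - 1) * \<beta>" using xc card_cube[of n] by (simp add: N_def)
    also have "cnt2 n k x x = \<alpha>" unfolding \<alpha>_def by (rule A_const[OF xc])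
    finally show ?thesis .
  qed
  have sB: "(\<Sum>x\<in>cube n. \<Sum>y\<in>cube n. cnt2 n k x y) = N * (\<alpha> + (N - 1) * \<beta>)"
  proof -
    have "(\<Sum>x\<in>cube n. \<Sum>y\<in>cube n. cnt2 n k x y) = (\<Sum>x\<in>cube n. \<alpha> + (N - 1) * \<beta>)"
      by (intro sum.cong refl row)
    thus ?thesis using card_cube[of n] by (simp add: N_def)
  qed
  have e2: "f * (s * s) = N * \<alpha> + N * (N - 1) * \<beta>"
    using double2[of n k] sumc2 sB by (simp add: algebra_simps)
  have r1: "real f * real s = real N * real \<alpha>"
    using arg_cong[OF e1, of real] by simp
  have cN: "real (N - 1) = real N - 1" using N2 by (simp add: of_nat_diff)
  have r2: "real f * (real s * real s) = real N * real \<alpha> + real N * (real N - 1) * real \<beta>"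
    using arg_cong[OF e2, of real] cN by simp
  have Npos: "real N * real N * (real N - 1) > 0" using N2 by simp
  have key: "real N * (real f * real f * real s * (real s - 1)) \<le> real f * real f * real s * real s * (real N - 1)"
  proof -
    have "real s - real N \<le> 0" using sN by simp
    moreover have "real f * real f * real s \<ge> 0" by simp
    ultimately have "real f * real f * real s * (real s - real N) \<le> 0"
      by (rule mult_nonneg_nonpos[OF _ _, rotated])
    thus ?thesis by (simp add: algebra_simps)
  qed
  have "real \<beta> * real f * (real N * real N * (real N - 1)) = real N * real f * (real N * (real N - 1) * real \<beta>)"
    by (simp add: algebra_simps)
  also have "real N * (real N - 1) * real \<beta> = real f * real s * (real s - 1)"
  proof -
    have "real f * real s * (real s - 1) = real f * (real s * real s) - real f * real s"
      by (simp add: algebra_simps)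
    thus ?thesis using r1 r2 by linarith
  qed
  also have "real N * real f * (real f * real s * (real s - 1)) = real N * (real f * real f * real s * (real s - 1))"
    by (simp add: algebra_simps)
  also have "\<dots> \<le> real f * real f * real s * real s * (real N - 1)" by (rule key)
  also have "\<dots> = (real f * real s) * (real f * real s) * (real N - 1)" by (simp add: algebra_simps)
  also have "\<dots> = real \<alpha> * real \<alpha> * (real N * real N * (real N - 1))" using r1 by (simp add: algebra_simps)
  finally have "real \<beta> * real f \<le> real \<alpha> * real \<alpha>" using Npos by (simp add: mult_le_cancel_right)
  thus ?thesis using B_pair[OF x y ne] A_const[OF x] A_const[OF y] by (simp add: \<alpha>_def \<beta>_def f_def)
qed



definition uu :: "bool list \<Rightarrow> bool list set \<Rightarrow> real" where
  "uu x V = (if x \<in> V then 0 else 1)"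

lemma prod_uu: fixes V :: "nat \<Rightarrow> bool list set" and m :: nat shows "(\<Prod>j<m. uu x (V j)) = (if (\<exists>j<m. x \<in> V j) then 0 else 1)"
  by (induction m) (auto simp: uu_def less_Suc_eq)

lemma Z_sum: "real (Zcount n m V) = (\<Sum>x\<in>cube n. \<Prod>j<m. uu x (V j))"
proof -
  have "real (Zcount n m V) = real (card {x\<in>cube n. \<not> (\<exists>j<m. x \<in> V j)})"
    unfolding Zcount_def by (rule arg_cong[where f = "\<lambda>A. real (card A)"]) auto
  also have "\<dots> = (\<Sum>x\<in>cube n. if (\<exists>j<m. x \<in> V j) then 0 else 1)"
    by (simp add: sum.If_cases Int_def conj_commute)
  also have "\<dots> = (\<Sum>x\<in>cube n. \<Prod>j<m. uu x (V j))" by (simp add: prod_uu)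
  finally show ?thesis .
qed

lemma Z2_sum: "real (Zcount n m V) ^ 2 = (\<Sum>x\<in>cube n. \<Sum>y\<in>cube n. \<Prod>j<m. uu x (V j) * uu y (V j))"
proof -
  have "real (Zcount n m V) ^ 2 = (\<Sum>x\<in>cube n. \<Prod>j<m. uu x (V j)) * (\<Sum>y\<in>cube n. \<Prod>j<m. uu y (V j))"
    by (simp add: Z_sum power2_eq_square)
  also have "\<dots> = (\<Sum>x\<in>cube n. \<Sum>y\<in>cube n. (\<Prod>j<m. uu x (V j)) * (\<Prod>j<m. uu y (V j)))"
    by (rule sum_product)
  also have "\<dots> = (\<Sum>x\<in>cube n. \<Sum>y\<in>cube n. \<Prod>j<m. uu x (V j) * uu y (V j))"
    by (simp add: prod.distrib)
  finally show ?thesis .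
qed

lemma sum_uu2: "(\<Sum>V\<in>flats n k. uu x V * uu y V) =
   real (card (flats n k)) - real (cnt2 n k x x) - real (cnt2 n k y y) + real (cnt2 n k x y)"
proof -
  define ind :: "bool list \<Rightarrow> bool list set \<Rightarrow> real" where "ind z V = (if z \<in> V then 1 else (0::real))" for z V
  have pt: "uu x V * uu y V = 1 - ind x V - ind y V + ind x V * ind y V" for V
    by (simp add: uu_def ind_def)
  have c: "real (cnt2 n k a b) = (\<Sum>V\<in>flats n k. ind a V * ind b V)" for a b
    unfolding cnt2_sum of_nat_sum by (intro sum.cong refl) (simp add: ind_def)
  have c1: "real (cnt2 n k a a) = (\<Sum>V\<in>flats n k. ind a V)" for a
    unfolding c by (intro sum.cong refl) (simp add: ind_def)
  show ?thesis unfolding pt c1 c by (simp add: sum.distrib sum_subtractf)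
qed

lemma exp_pair:
  assumes k: "1 \<le> k" "k \<le> n" and x: "x \<in> cube n" and y: "y \<in> cube n" and ne: "x \<noteq> y"
  shows "(\<Sum>V\<in>flats n k. uu x V * uu y V) / card (flats n k) \<le>
         ((\<Sum>V\<in>flats n k. uu x V) / card (flats n k)) * ((\<Sum>V\<in>flats n k. uu y V) / card (flats n k))"
proof -
  define f where "f = real (card (flats n k))"
  define ax where "ax = real (cnt2 n k x x)"
  define ay where "ay = real (cnt2 n k y y)"
  define b where "b = real (cnt2 n k x y)"
  have fpos: "f > 0" using flats_nonempty[OF k(2)] finite_flats[of n k] by (simp add: f_def card_gt_0_iff)
  have sx: "(\<Sum>V\<in>flats n k. uu x V) = f - ax"
  proof -
    have "(\<Sum>V\<in>flats n k. uu x V) = (\<Sum>V\<in>flats n k. uu x V * uu x V)"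
      by (intro sum.cong refl) (simp add: uu_def)
    thus ?thesis using sum_uu2[where n=n and k=k and x=x and y=x] by (simp add: f_def ax_def)
  qed
  have sy: "(\<Sum>V\<in>flats n k. uu y V) = f - ay"
  proof -
    have "(\<Sum>V\<in>flats n k. uu y V) = (\<Sum>V\<in>flats n k. uu y V * uu y V)"
      by (intro sum.cong refl) (simp add: uu_def)
    thus ?thesis using sum_uu2[where n=n and k=k and x=y and y=y] by (simp add: f_def ay_def)
  qed
  have nc: "b * f \<le> ax * ay" using neg_corr[OF k x y ne] by (simp add: b_def f_def ax_def ay_def)
  have "(f - ax - ay + b) / f \<le> ((f - ax) / f) * ((f - ay) / f)"
  proof -
    have "(f - ax - ay + b) * f \<le> (f - ax) * (f - ay)" using nc by (simp add: algebra_simps)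
    hence "(f - ax - ay + b) * f / (f * f) \<le> (f - ax) * (f - ay) / (f * f)"
      using fpos by (intro divide_right_mono) auto
    thus ?thesis using fpos by (simp add: field_simps)
  qed
  thus ?thesis using sum_uu2[where n=n and k=k and x=x and y=y] sx sy by (simp add: f_def ax_def ay_def b_def)
qed



lemma moment_bound:
  assumes k: "1 \<le> k" "k \<le> n"
  shows "measure_pmf.expectation (P_unif n k m) (\<lambda>V. real (Zcount n m V) ^ 2) \<le>
     measure_pmf.expectation (P_unif n k m) (\<lambda>V. real (Zcount n m V)) +
     (measure_pmf.expectation (P_unif n k m) (\<lambda>V. real (Zcount n m V)))^2"
proof -
  define F where "F = flats n k"
  have Ff: "finite F" and Fne: "F \<noteq> {}" using finite_flats flats_nonempty[OF k(2)] by (auto simp: F_def)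
  define Q where "Q = pmf_of_set F"
  have sQ: "set_pmf Q = F" using Ff Fne by (simp add: Q_def)
  have intQ: "integrable (measure_pmf Q) h" for h :: "bool list set \<Rightarrow> real"
    by (rule integrable_measure_pmf_finite) (simp add: sQ Ff)
  define P where "P = Pi_pmf {..<m} {} (\<lambda>_. Q)"
  have PP: "P_unif n k m = P" by (simp add: P_unif_def P_def Q_def F_def)
  define ex where "ex x = measure_pmf.expectation Q (uu x)" for x
  define exy where "exy x y = measure_pmf.expectation Q (\<lambda>V. uu x V * uu y V)" for x y
  have exQ: "measure_pmf.expectation Q h = (\<Sum>V\<in>F. h V) / card F" for h :: "bool list set \<Rightarrow> real"
    unfolding Q_def using Ff Fne by (simp add: integral_pmf_of_set)
  have E1: "measure_pmf.expectation P (\<lambda>V. \<Prod>j<m. uu x (V j)) = ex x ^ m" for x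
  proof -
    have "measure_pmf.expectation P (\<lambda>V. \<Prod>j\<in>{..<m}. uu x (V j)) = (\<Prod>j\<in>{..<m}. ex x)"
      unfolding P_def ex_def
      by (rule expectation_prod_Pi_pmf[where f = "\<lambda>_. uu x"]) (auto simp: intQ uu_def)
    thus ?thesis by simp
  qed
  have E2: "measure_pmf.expectation P (\<lambda>V. \<Prod>j<m. uu x (V j) * uu y (V j)) = exy x y ^ m" for x y
  proof -
    have "measure_pmf.expectation P (\<lambda>V. \<Prod>j\<in>{..<m}. uu x (V j) * uu y (V j)) = (\<Prod>j\<in>{..<m}. exy x y)"
      unfolding P_def exy_def
      by (rule expectation_prod_Pi_pmf[where f = "\<lambda>_ V. uu x V * uu y V"]) (auto simp: intQ uu_def)
    thus ?thesis by simp
  qed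
  have intP1: "integrable (measure_pmf P) (\<lambda>V. \<Prod>j\<in>{..<m}. uu x (V j))" for x
    unfolding P_def by (rule integrable_prod_Pi_pmf) (auto simp: intQ)
  have intP2: "integrable (measure_pmf P) (\<lambda>V. \<Prod>j\<in>{..<m}. uu x (V j) * uu y (V j))" for x y
    unfolding P_def by (rule integrable_prod_Pi_pmf[where f = "\<lambda>_ V. uu x V * uu y V"]) (auto simp: intQ)
  define EZ where "EZ = measure_pmf.expectation P (\<lambda>V. real (Zcount n m V))"
  define EZ2 where "EZ2 = measure_pmf.expectation P (\<lambda>V. real (Zcount n m V) ^ 2)"
  have EZe: "EZ = (\<Sum>x\<in>cube n. ex x ^ m)"
  proof -
    have "EZ = measure_pmf.expectation P (\<lambda>V. \<Sum>x\<in>cube n. \<Prod>j<m. uu x (V j))"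
      unfolding EZ_def by (simp add: Z_sum)
    also have "\<dots> = (\<Sum>x\<in>cube n. measure_pmf.expectation P (\<lambda>V. \<Prod>j<m. uu x (V j)))"
      by (rule Bochner_Integration.integral_sum) (rule intP1)
    finally show ?thesis by (simp add: E1)
  qed
  have EZ2e: "EZ2 = (\<Sum>x\<in>cube n. \<Sum>y\<in>cube n. exy x y ^ m)"
  proof -
    have "EZ2 = measure_pmf.expectation P (\<lambda>V. \<Sum>x\<in>cube n. \<Sum>y\<in>cube n. \<Prod>j<m. uu x (V j) * uu y (V j))"
      unfolding EZ2_def by (simp add: Z2_sum)
    also have "\<dots> = (\<Sum>x\<in>cube n. measure_pmf.expectation P (\<lambda>V. \<Sum>y\<in>cube n. \<Prod>j<m. uu x (V j) * uu y (V j)))"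
      by (rule Bochner_Integration.integral_sum) (intro Bochner_Integration.integrable_sum intP2)
    also have "\<dots> = (\<Sum>x\<in>cube n. \<Sum>y\<in>cube n. measure_pmf.expectation P (\<lambda>V. \<Prod>j<m. uu x (V j) * uu y (V j)))"
      by (intro sum.cong refl Bochner_Integration.integral_sum intP2)
    finally show ?thesis by (simp add: E2)
  qed
  have ex_nn: "ex x \<ge> 0" for x unfolding ex_def exQ by (intro divide_nonneg_nonneg sum_nonneg) (auto simp: uu_def)
  have exy_nn: "exy x y \<ge> 0" for x y unfolding exy_def exQ by (intro divide_nonneg_nonneg sum_nonneg) (auto simp: uu_def)
  have diag: "exy x x = ex x" for x
  proof -
    have "(\<lambda>V. uu x V * uu x V) = uu x" by (auto simp: uu_def)
    thus ?thesis by (simp add: exy_def ex_def)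
  qed
  have off: "exy x y \<le> ex x * ex y" if "x \<in> cube n" "y \<in> cube n" "x \<noteq> y" for x y
    unfolding exy_def ex_def exQ using exp_pair[OF k that] by (simp add: F_def)
  have pt: "exy x y ^ m \<le> (if x = y then ex x ^ m else 0) + ex x ^ m * ex y ^ m"
    if "x \<in> cube n" "y \<in> cube n" for x y
  proof (cases "x = y")
    case True
    have "0 \<le> ex x ^ m * ex x ^ m" using ex_nn by simp
    thus ?thesis using True diag by simp
  next
    case False
    have "exy x y ^ m \<le> (ex x * ex y) ^ m" by (rule power_mono[OF off[OF that False] exy_nn])
    thus ?thesis using False by (simp add: power_mult_distrib)
  qed
  have "EZ2 \<le> (\<Sum>x\<in>cube n. \<Sum>y\<in>cube n. (if x = y then ex x ^ m else 0) + ex x ^ m * ex y ^ m)"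
    unfolding EZ2e by (intro sum_mono pt)
  also have "\<dots> = (\<Sum>x\<in>cube n. ex x ^ m) + (\<Sum>x\<in>cube n. \<Sum>y\<in>cube n. ex x ^ m * ex y ^ m)"
    by (simp add: sum.distrib)
  also have "(\<Sum>x\<in>cube n. \<Sum>y\<in>cube n. ex x ^ m * ex y ^ m) = EZ ^ 2"
    unfolding EZe power2_eq_square by (rule sum_product[symmetric])
  finally have "EZ2 \<le> EZ + EZ ^ 2" using EZe by simp
  thus ?thesis by (simp add: PP EZ_def EZ2_def)
qed

theorem mainTheorem2:
  fixes k :: nat and \<Delta> :: real
  assumes "k \<ge> 1" and "\<Delta> > 0"
  shows "\<exists>eps :: nat \<Rightarrow> real. eps \<longlonglongrightarrow> 0 \<and>
    (\<forall>n\<ge>k. let m = nat \<lfloor>\<Delta> * real n\<rfloor>;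
                 EZ = measure_pmf.expectation (P_unif n k m) (\<lambda>V. real (Zcount n m V));
                 EZ2 = measure_pmf.expectation (P_unif n k m) (\<lambda>V. real (Zcount n m V) ^ 2)
             in EZ2 / EZ ^ 2 \<le> 1 + eps n + 1 / EZ)"
proof (intro exI[of _ "\<lambda>_. 0"] conjI allI impI)
  show "(\<lambda>_. 0::real) \<longlonglongrightarrow> 0" by simp
  fix n assume n: "n \<ge> k"
  define m where "m = nat \<lfloor>\<Delta> * real n\<rfloor>"
  define EZ where "EZ = measure_pmf.expectation (P_unif n k m) (\<lambda>V. real (Zcount n m V))"
  define EZ2 where "EZ2 = measure_pmf.expectation (P_unif n k m) (\<lambda>V. real (Zcount n m V) ^ 2)"
  have b: "EZ2 \<le> EZ + EZ^2" unfolding EZ_def EZ2_def by (rule moment_bound[OF assms(1) n])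
  have nn: "EZ \<ge> 0" unfolding EZ_def by (rule Bochner_Integration.integral_nonneg) simp
  have "EZ2 / EZ ^ 2 \<le> 1 + 0 + 1 / EZ"
  proof (cases "EZ = 0")
    case True thus ?thesis by simp
  next
    case False
    hence pos: "EZ > 0" using nn by simp
    have "EZ2 / EZ ^ 2 \<le> (EZ + EZ^2) / EZ^2" using b pos by (intro divide_right_mono) auto
    also have "\<dots> = 1 + 0 + 1 / EZ" using pos by (simp add: field_simps power2_eq_square)
    finally show ?thesis .
  qed
  thus "let m = nat \<lfloor>\<Delta> * real n\<rfloor>;
                 EZ = measure_pmf.expectation (P_unif n k m) (\<lambda>V. real (Zcount n m V));
                 EZ2 = measure_pmf.expectation (P_unif n k m) (\<lambda>V. real (Zcount n m V) ^ 2)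
             in EZ2 / EZ ^ 2 \<le> 1 + 0 + 1 / EZ"
    by (simp add: Let_def m_def EZ_def EZ2_def)
qed

end
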